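(* Let $F$ be a $2$-dimensional freezing cellular automaton with neighborhood $\mathrm{VN}_2$, let $c$ be a configuration, $z\in\mathbb{Z}^2$ and $t\geq1$ with $F^t(c)_z\neq c_z$. Then there exist a position $z'$ which is unstable in $c$ and a changing path of length at most $t$ from $z$ to $z'$ between the configurations $c$ and $F^t(c)$.
   Context: A $2$-dimensional cellular automaton is $F=(2,Q,N,f)$ with $Q$ finite, $N\subset\mathbb{Z}^2$ finite, $f:Q^N\to Q$, global map $F(c)_z=f(c|_{z+N})$; it is freezing if there is a partial order $\preceq$ on $Q$ with $F(c)_z\preceq c_z$ for all $c,z$. $\mathrm{VN}_2=\{(0,0),(\pm1,0),(0,\pm1)\}$. A position $z$ is stable in $c$ if $F(c)_z=c_z$ and unstable otherwise. A changing path from $z$ to $z'$ between configurations $c$ and $F^t(c)$ is a sequence $z_1,\dots,z_n$ of positions with $z_1=z$, $z_n=z'$, $z_{i+1}\in z_i+\mathrm{VN}_2$ for all $i<n$, and $c_{z_i}\neq F^t(c)_{z_i}$ for all $i$; its length is $n$. *)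

theory Defs
  imports Main
begin

type_synonym pos = "int \<times> int"

definition add_pos :: "pos \<Rightarrow> pos \<Rightarrow> pos" where
  "add_pos z n = (fst z + fst n, snd z + snd n)"

definition VN2 :: "pos set" where
  "VN2 = {(0,0), (1,0), (-1,0), (0,1), (0,-1)}"

text \<open>Global map of the CA with neighbourhood N and local rule f : Q^N -> Q.
  A pattern in Q^N is represented as a function pos => 'q that is
  'undefined' outside N, so f only sees c restricted to z+N.\<close>
definition global_map :: "pos set \<Rightarrow> ((pos \<Rightarrow> 'q) \<Rightarrow> 'q) \<Rightarrow> (pos \<Rightarrow> 'q) \<Rightarrow> (pos \<Rightarrow> 'q)" where
  "global_map N f c = (\<lambda>z. f (\<lambda>n. if n \<in> N then c (add_pos z n) else undefined))"

definition freezing :: "pos set \<Rightarrow> ((pos \<Rightarrow> 'q) \<Rightarrow> 'q) \<Rightarrow> bool" where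
  "freezing N f = (\<exists>le :: 'q \<Rightarrow> 'q \<Rightarrow> bool.
      (\<forall>a. le a a) \<and> (\<forall>a b. le a b \<longrightarrow> le b a \<longrightarrow> a = b) \<and>
      (\<forall>a b d. le a b \<longrightarrow> le b d \<longrightarrow> le a d) \<and>
      (\<forall>c z. le (global_map N f c z) (c z)))"

definition unstable :: "pos set \<Rightarrow> ((pos \<Rightarrow> 'q) \<Rightarrow> 'q) \<Rightarrow> (pos \<Rightarrow> 'q) \<Rightarrow> pos \<Rightarrow> bool" where
  "unstable N f c z = (global_map N f c z \<noteq> c z)"

text \<open>A changing path from z to z' between c and c' (= F^t c): a nonempty list
  of positions, consecutive ones VN2-adjacent, all of whose cells differ in c and c'.
  Its length is the length of the list.\<close>
definition changing_path :: "(pos \<Rightarrow> 'q) \<Rightarrow> (pos \<Rightarrow> 'q) \<Rightarrow> pos \<Rightarrow> pos \<Rightarrow> pos list \<Rightarrow> bool" where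
  "changing_path c c' z z' p = (p \<noteq> [] \<and> hd p = z \<and> last p = z' \<and>
      (\<forall>i. Suc i < length p \<longrightarrow> p ! Suc i \<in> add_pos (p ! i) ` VN2) \<and>
      (\<forall>i < length p. c (p ! i) \<noteq> c' (p ! i)))"

end

theory Submission
  imports Defs
begin

lemma persist:
  fixes G :: "(pos \<Rightarrow> 'q) \<Rightarrow> (pos \<Rightarrow> 'q)"
  assumes refl: "\<forall>a. le a a" and anti: "\<forall>a b. le a b \<longrightarrow> le b a \<longrightarrow> a = b"
    and trans: "\<forall>a b d. le a b \<longrightarrow> le b d \<longrightarrow> le a d"
    and dec: "\<forall>c z. le (G c z) (c z)"
  shows "le ((G ^^ (k + m)) c z) ((G ^^ k) c z)"
proof (induction m)
  case 0 then show ?case using refl by simp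
next
  case (Suc m)
  have "le ((G ^^ (k + Suc m)) c z) ((G ^^ (k + m)) c z)"
    using dec by (metis add_Suc_right funpow.simps(2) o_apply)
  then show ?case using Suc trans by blast
qed

lemma persist2:
  fixes G :: "(pos \<Rightarrow> 'q) \<Rightarrow> (pos \<Rightarrow> 'q)"
  assumes refl: "\<forall>a. le a a" and anti: "\<forall>a b. le a b \<longrightarrow> le b a \<longrightarrow> a = b"
    and trans: "\<forall>a b d. le a b \<longrightarrow> le b d \<longrightarrow> le a d"
    and dec: "\<forall>c z. le (G c z) (c z)"
    and ne: "(G ^^ k) c z \<noteq> c z" and km: "k \<le> m"
  shows "(G ^^ m) c z \<noteq> c z"
proof
  assume eq: "(G ^^ m) c z = c z"
  obtain d where m: "m = k + d" using km le_Suc_ex by blast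
  have 1: "le ((G ^^ m) c z) ((G ^^ k) c z)" using persist[OF refl anti trans dec] m by blast
  have 2: "le ((G ^^ (0 + k)) c z) ((G ^^ 0) c z)" using persist[OF refl anti trans dec] by blast
  from 1 2 eq anti ne show False by simp
qed

lemma main_ind:
  fixes f :: "(pos \<Rightarrow> 'q) \<Rightarrow> 'q" and c :: "pos \<Rightarrow> 'q"
  assumes refl: "\<forall>a. le a a" and anti: "\<forall>a b. le a b \<longrightarrow> le b a \<longrightarrow> a = b"
    and trans: "\<forall>a b d. le a b \<longrightarrow> le b d \<longrightarrow> le a d"
    and dec: "\<forall>c z. le (global_map VN2 f c z) (c z)"
  shows "\<forall>z. (global_map VN2 f ^^ t) c z \<noteq> c z \<longrightarrow>
    (\<exists>z' p. unstable VN2 f c z' \<and> changing_path c ((global_map VN2 f ^^ t) c) z z' p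
               \<and> length p \<le> t)"
proof (induction t)
  case 0 then show ?case by simp
next
  case (Suc k)
  let ?G = "global_map VN2 f"
  show ?case
  proof (intro allI impI)
    fix z assume ne: "(?G ^^ Suc k) c z \<noteq> c z"
    show "\<exists>z' p. unstable VN2 f c z' \<and> changing_path c ((?G ^^ Suc k) c) z z' p
               \<and> length p \<le> Suc k"
    proof (cases "unstable VN2 f c z")
      case True
      then show ?thesis using ne
        by (intro exI[of _ z] exI[of _ "[z]"]) (simp add: changing_path_def)
    next
      case False
      then have st: "?G c z = c z" by (simp add: unstable_def)
      have "?G ((?G ^^ k) c) z \<noteq> ?G c z" using ne st by simp
      then obtain n where n: "n \<in> VN2" "(?G ^^ k) c (add_pos z n) \<noteq> c (add_pos z n)"
        unfolding global_map_def by (metis (no_types, lifting))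
      then have "k \<noteq> 0" by (metis funpow_0)
      from Suc.IH n(2) obtain z' p where p: "unstable VN2 f c z'"
        "changing_path c ((?G ^^ k) c) (add_pos z n) z' p" "length p \<le> k" by blast
      have pers: "\<And>w. (?G ^^ k) c w \<noteq> c w \<Longrightarrow> (?G ^^ Suc k) c w \<noteq> c w"
        using persist2[OF refl anti trans dec] by (metis le_SucI order_refl)
      have "changing_path c ((?G ^^ Suc k) c) z z' (z # p)"
        unfolding changing_path_def
      proof (intro conjI allI impI)
        show "last (z # p) = z'" using p(2) by (simp add: changing_path_def)
        fix i assume i: "Suc i < length (z # p)"
        show "(z # p) ! Suc i \<in> add_pos ((z # p) ! i) ` VN2"
        proof (cases i)
          case 0 then show ?thesis using p(2) n(1)
            by (auto simp: changing_path_def hd_conv_nth)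
        next
          case (Suc j) then show ?thesis using p(2) i by (simp add: changing_path_def)
        qed
      next
        fix i assume i: "i < length (z # p)"
        show "c ((z # p) ! i) \<noteq> (?G ^^ Suc k) c ((z # p) ! i)"
        proof (cases i)
          case 0 then show ?thesis using ne by simp
        next
          case (Suc j) then show ?thesis using p(2) i pers
            by (simp add: changing_path_def) (metis)
        qed
      qed simp_all
      then show ?thesis using p by (intro exI[of _ z'] exI[of _ "z # p"]) simp
    qed
  qed
qed

theorem mainTheorem8:
  fixes f :: "(pos \<Rightarrow> 'q::finite) \<Rightarrow> 'q" and c :: "pos \<Rightarrow> 'q" and z :: pos and t :: nat
  assumes "freezing VN2 f"
    and "t \<ge> 1"
    and "(global_map VN2 f ^^ t) c z \<noteq> c z"
  shows "\<exists>z' p. unstable VN2 f c z' \<and> changing_path c ((global_map VN2 f ^^ t) c) z z' p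
               \<and> length p \<le> t"
proof -
  from assms(1) obtain le :: "'q \<Rightarrow> 'q \<Rightarrow> bool" where
    h: "\<forall>a. le a a" "\<forall>a b. le a b \<longrightarrow> le b a \<longrightarrow> a = b"
      "\<forall>a b d. le a b \<longrightarrow> le b d \<longrightarrow> le a d" "\<forall>c z. le (global_map VN2 f c z) (c z)"
    unfolding freezing_def by blast
  show ?thesis using main_ind[OF h, of t] assms(3) by blast
qed

end
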